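(* Let $S$ and $T$ be ordered forests, let $A$ be a non-empty finite linear order, and let $i\colon S\to T$ be a tree embedding. Then there exists an $A$-rigid surjection $s\colon A\oplus T\to A\oplus S$ such that the restriction to $S$ of the injection of $s$ is equal to $i$.
   Context: A tree is a finite, non-empty poset with a smallest element (root) in which the predecessors of each element form a chain. An ordered tree has a linear order on the immediate successors of each node, inducing the lexicographic order $\leq$ ($v\leq w$ if $v\sqsubseteq w$; for incomparable $v,w$, compare the immediate successors of $v\wedge w$ lying below $v$ and $w$). A forest is a finite poset in which the predecessors of each element form a chain; $1\oplus T$ is the tree obtained by adding a new root below everything. An ordered forest is a forest $T$ with a linear order $\leq_T$ that is the restriction of the lexicographic order of some ordered-tree structure on $1\oplus T$. A tree embedding $S\to T$ of ordered forests is a function extending to an embedding $1\oplus S\to 1\oplus T$. For a non-empty linear order $A$ and an ordered forest $T$, $A\oplus T$ is the ordered tree obtained by placing $T$ above $\max A$ (minimal elements of $T$ become immediate successors of $\max A$), with linear order putting $T$ after $A$. A morphism $e$ of ordered trees preserves $\wedge$, is $\leq$-monotone and maps root to root; an embedding is an injective morphism. A rigid surjection $f\colon T\to S$ is a function for which there is a morphism $e\colon S\to T$ (its injection) with $f\circ e={\rm id}_S$ and $e(f(w))\sqsubseteq_T w$ for all $w$. An $A$-rigid surjection $t\colon A\oplus T\to A\oplus S$ is a rigid surjection with $t\upharpoonright A={\rm id}_A$. *)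

theory Defs
  imports Main
begin

definition porder_on :: "'a set \<Rightarrow> ('a \<Rightarrow> 'a \<Rightarrow> bool) \<Rightarrow> bool" where
  "porder_on T le \<longleftrightarrow>
     (\<forall>x\<in>T. le x x) \<and>
     (\<forall>x\<in>T. \<forall>y\<in>T. le x y \<and> le y x \<longrightarrow> x = y) \<and>
     (\<forall>x\<in>T. \<forall>y\<in>T. \<forall>z\<in>T. le x y \<and> le y z \<longrightarrow> le x z)"

definition linorder_on :: "'a set \<Rightarrow> ('a \<Rightarrow> 'a \<Rightarrow> bool) \<Rightarrow> bool" where
  "linorder_on T le \<longleftrightarrow> porder_on T le \<and> (\<forall>x\<in>T. \<forall>y\<in>T. le x y \<or> le y x)"

definition forest :: "'a set \<Rightarrow> ('a \<Rightarrow> 'a \<Rightarrow> bool) \<Rightarrow> bool" where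
  "forest T le \<longleftrightarrow> finite T \<and> porder_on T le \<and>
     (\<forall>w\<in>T. \<forall>u\<in>T. \<forall>v\<in>T. le u w \<and> le v w \<longrightarrow> le u v \<or> le v u)"

definition tree :: "'a set \<Rightarrow> ('a \<Rightarrow> 'a \<Rightarrow> bool) \<Rightarrow> bool" where
  "tree T le \<longleftrightarrow> forest T le \<and> T \<noteq> {} \<and> (\<exists>r\<in>T. \<forall>w\<in>T. le r w)"

definition troot :: "'a set \<Rightarrow> ('a \<Rightarrow> 'a \<Rightarrow> bool) \<Rightarrow> 'a" where
  "troot T le = (THE r. r \<in> T \<and> (\<forall>w\<in>T. le r w))"

definition tmeet :: "'a set \<Rightarrow> ('a \<Rightarrow> 'a \<Rightarrow> bool) \<Rightarrow> 'a \<Rightarrow> 'a \<Rightarrow> 'a" where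
  "tmeet T le v w = (THE m. m \<in> T \<and> le m v \<and> le m w \<and>
                        (\<forall>u\<in>T. le u v \<and> le u w \<longrightarrow> le u m))"

definition isucc :: "'a set \<Rightarrow> ('a \<Rightarrow> 'a \<Rightarrow> bool) \<Rightarrow> 'a \<Rightarrow> 'a \<Rightarrow> bool" where
  "isucc T le v w \<longleftrightarrow> v \<in> T \<and> w \<in> T \<and> le v w \<and> v \<noteq> w \<and>
     (\<forall>u\<in>T. le v u \<and> le u w \<longrightarrow> u = v \<or> u = w)"

definition sibling_orders :: "'a set \<Rightarrow> ('a \<Rightarrow> 'a \<Rightarrow> bool) \<Rightarrow> ('a \<Rightarrow> 'a \<Rightarrow> 'a \<Rightarrow> bool) \<Rightarrow> bool" where
  "sibling_orders T le sib \<longleftrightarrow> (\<forall>v\<in>T. linorder_on {w. isucc T le v w} (sib v))"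

definition lex :: "'a set \<Rightarrow> ('a \<Rightarrow> 'a \<Rightarrow> bool) \<Rightarrow> ('a \<Rightarrow> 'a \<Rightarrow> 'a \<Rightarrow> bool) \<Rightarrow> 'a \<Rightarrow> 'a \<Rightarrow> bool" where
  "lex T le sib v w \<longleftrightarrow> le v w \<or>
     (\<not> le v w \<and> \<not> le w v \<and>
       (\<exists>v' w'. isucc T le (tmeet T le v w) v' \<and> isucc T le (tmeet T le v w) w' \<and>
                le v' v \<and> le w' w \<and> sib (tmeet T le v w) v' w'))"

text \<open>An ordered tree, represented by its tree order le and the lexicographic
  order lo induced by some ordered-tree structure.\<close>
definition ordered_tree :: "'a set \<Rightarrow> ('a \<Rightarrow> 'a \<Rightarrow> bool) \<Rightarrow> ('a \<Rightarrow> 'a \<Rightarrow> bool) \<Rightarrow> bool" where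
  "ordered_tree T le lo \<longleftrightarrow> tree T le \<and>
     (\<exists>sib. sibling_orders T le sib \<and> (\<forall>v\<in>T. \<forall>w\<in>T. lo v w \<longleftrightarrow> lex T le sib v w))"

definition one_plus :: "'a set \<Rightarrow> 'a option set" where
  "one_plus T = insert None (Some ` T)"

definition one_plus_rel :: "('a \<Rightarrow> 'a \<Rightarrow> bool) \<Rightarrow> 'a option \<Rightarrow> 'a option \<Rightarrow> bool" where
  "one_plus_rel r x y = (case x of None \<Rightarrow> True
      | Some a \<Rightarrow> (case y of None \<Rightarrow> False | Some b \<Rightarrow> r a b))"

text \<open>Ordered forest: forest with a linear order which is the restriction of the lexicographic
  order of some ordered-tree structure on 1 \<oplus> T.\<close>
definition ordered_forest :: "'a set \<Rightarrow> ('a \<Rightarrow> 'a \<Rightarrow> bool) \<Rightarrow> ('a \<Rightarrow> 'a \<Rightarrow> bool) \<Rightarrow> bool" where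
  "ordered_forest T le lo \<longleftrightarrow> forest T le \<and>
     ordered_tree (one_plus T) (one_plus_rel le) (one_plus_rel lo)"

definition a_plus :: "'c set \<Rightarrow> 'a set \<Rightarrow> ('c + 'a) set" where
  "a_plus A T = Inl ` A \<union> Inr ` T"

text \<open>Both the tree order and the linear order of A \<oplus> T: A is a chain, T sits above max A
  and comes after A.\<close>
definition a_plus_rel :: "('c \<Rightarrow> 'c \<Rightarrow> bool) \<Rightarrow> ('a \<Rightarrow> 'a \<Rightarrow> bool) \<Rightarrow> ('c + 'a) \<Rightarrow> ('c + 'a) \<Rightarrow> bool" where
  "a_plus_rel rA r x y = (case x of
       Inl a \<Rightarrow> (case y of Inl b \<Rightarrow> rA a b | Inr _ \<Rightarrow> True)
     | Inr s \<Rightarrow> (case y of Inl _ \<Rightarrow> False | Inr t \<Rightarrow> r s t))"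

definition ot_morphism ::
  "'a set \<Rightarrow> ('a \<Rightarrow> 'a \<Rightarrow> bool) \<Rightarrow> ('a \<Rightarrow> 'a \<Rightarrow> bool) \<Rightarrow>
   'b set \<Rightarrow> ('b \<Rightarrow> 'b \<Rightarrow> bool) \<Rightarrow> ('b \<Rightarrow> 'b \<Rightarrow> bool) \<Rightarrow> ('a \<Rightarrow> 'b) \<Rightarrow> bool" where
  "ot_morphism S leS loS T leT loT e \<longleftrightarrow>
     e ` S \<subseteq> T \<and>
     (\<forall>v\<in>S. \<forall>w\<in>S. e (tmeet S leS v w) = tmeet T leT (e v) (e w)) \<and>
     (\<forall>v\<in>S. \<forall>w\<in>S. loS v w \<longrightarrow> loT (e v) (e w)) \<and>
     e (troot S leS) = troot T leT"

definition ot_embedding ::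
  "'a set \<Rightarrow> ('a \<Rightarrow> 'a \<Rightarrow> bool) \<Rightarrow> ('a \<Rightarrow> 'a \<Rightarrow> bool) \<Rightarrow>
   'b set \<Rightarrow> ('b \<Rightarrow> 'b \<Rightarrow> bool) \<Rightarrow> ('b \<Rightarrow> 'b \<Rightarrow> bool) \<Rightarrow> ('a \<Rightarrow> 'b) \<Rightarrow> bool" where
  "ot_embedding S leS loS T leT loT e \<longleftrightarrow> ot_morphism S leS loS T leT loT e \<and> inj_on e S"

definition tree_embedding ::
  "'a set \<Rightarrow> ('a \<Rightarrow> 'a \<Rightarrow> bool) \<Rightarrow> ('a \<Rightarrow> 'a \<Rightarrow> bool) \<Rightarrow>
   'b set \<Rightarrow> ('b \<Rightarrow> 'b \<Rightarrow> bool) \<Rightarrow> ('b \<Rightarrow> 'b \<Rightarrow> bool) \<Rightarrow> ('a \<Rightarrow> 'b) \<Rightarrow> bool" where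
  "tree_embedding S leS loS T leT loT i \<longleftrightarrow> i ` S \<subseteq> T \<and>
     (\<exists>e. ot_embedding (one_plus S) (one_plus_rel leS) (one_plus_rel loS)
                        (one_plus T) (one_plus_rel leT) (one_plus_rel loT) e \<and>
          (\<forall>x\<in>S. e (Some x) = Some (i x)))"

definition rigid_surj_inj ::
  "'b set \<Rightarrow> ('b \<Rightarrow> 'b \<Rightarrow> bool) \<Rightarrow> ('b \<Rightarrow> 'b \<Rightarrow> bool) \<Rightarrow>
   'a set \<Rightarrow> ('a \<Rightarrow> 'a \<Rightarrow> bool) \<Rightarrow> ('a \<Rightarrow> 'a \<Rightarrow> bool) \<Rightarrow> ('b \<Rightarrow> 'a) \<Rightarrow> ('a \<Rightarrow> 'b) \<Rightarrow> bool" where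
  "rigid_surj_inj T leT loT S leS loS f e \<longleftrightarrow>
     f ` T \<subseteq> S \<and> ot_morphism S leS loS T leT loT e \<and>
     (\<forall>x\<in>S. f (e x) = x) \<and> (\<forall>w\<in>T. leT (e (f w)) w)"

definition A_rigid_surj_inj ::
  "'c set \<Rightarrow> ('c \<Rightarrow> 'c \<Rightarrow> bool) \<Rightarrow>
   'b set \<Rightarrow> ('b \<Rightarrow> 'b \<Rightarrow> bool) \<Rightarrow> ('b \<Rightarrow> 'b \<Rightarrow> bool) \<Rightarrow>
   'a set \<Rightarrow> ('a \<Rightarrow> 'a \<Rightarrow> bool) \<Rightarrow> ('a \<Rightarrow> 'a \<Rightarrow> bool) \<Rightarrow>
   ('c + 'b \<Rightarrow> 'c + 'a) \<Rightarrow> ('c + 'a \<Rightarrow> 'c + 'b) \<Rightarrow> bool" where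
  "A_rigid_surj_inj A leA T leT loT S leS loS s e \<longleftrightarrow>
     rigid_surj_inj (a_plus A T) (a_plus_rel leA leT) (a_plus_rel leA loT)
                    (a_plus A S) (a_plus_rel leA leS) (a_plus_rel leA loS) s e \<and>
     (\<forall>a\<in>A. s (Inl a) = Inl a)"

end

theory Submission
  imports Defs
begin

definition is_meet :: "'a set \<Rightarrow> ('a \<Rightarrow> 'a \<Rightarrow> bool) \<Rightarrow> 'a \<Rightarrow> 'a \<Rightarrow> 'a \<Rightarrow> bool" where
  "is_meet X le v w m \<longleftrightarrow> m \<in> X \<and> le m v \<and> le m w \<and> (\<forall>u\<in>X. le u v \<and> le u w \<longrightarrow> le u m)"

lemma finite_max_rel:
  assumes "finite L" "L \<noteq> {}"
    and "\<forall>x\<in>L. \<forall>y\<in>L. R x y \<or> R y x"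
    and "\<forall>x\<in>L. \<forall>y\<in>L. \<forall>z\<in>L. R x y \<and> R y z \<longrightarrow> R x z"
  shows "\<exists>m\<in>L. \<forall>u\<in>L. R u m"
  using assms
proof (induction L rule: finite_ne_induct)
  case (singleton x) then show ?case by blast
next
  case (insert x F)
  have "\<forall>x\<in>F. \<forall>y\<in>F. R x y \<or> R y x" "\<forall>x\<in>F. \<forall>y\<in>F. \<forall>z\<in>F. R x y \<and> R y z \<longrightarrow> R x z"
    using insert.prems by blast+
  with insert.IH obtain m where m: "m \<in> F" "\<forall>u\<in>F. R u m" by blast
  show ?case
  proof (cases "R m x")
    case True
    have "\<forall>u\<in>insert x F. R u x"
    proof
      fix u assume u: "u \<in> insert x F"
      show "R u x"
      proof (cases "u = x")
        case True then show ?thesis using insert.prems(1) by blast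
      next
        case False then have "u \<in> F" using u by auto
        then show ?thesis using m \<open>R m x\<close> insert.prems(2) by blast
      qed
    qed
    then show ?thesis by blast
  next
    case False
    then have "R x m" using insert.prems m by blast
    then show ?thesis using m by blast
  qed
qed

lemma tmeet_eq:
  assumes "\<forall>a\<in>X. \<forall>b\<in>X. le a b \<and> le b a \<longrightarrow> a = b" "is_meet X le v w m"
  shows "tmeet X le v w = m"
  unfolding tmeet_def
  apply (rule the_equality)
  using assms unfolding is_meet_def by blast+

lemma tree_meet:
  assumes "tree X le" "v \<in> X" "w \<in> X"
  shows "is_meet X le v w (tmeet X le v w)"
proof -
  from assms(1) have fo: "forest X le" and r: "\<exists>r\<in>X. \<forall>w\<in>X. le r w" by (auto simp: tree_def)
  from fo have fin: "finite X" and po: "porder_on X le"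
    and ch: "\<forall>w\<in>X. \<forall>u\<in>X. \<forall>v\<in>X. le u w \<and> le v w \<longrightarrow> le u v \<or> le v u" by (auto simp: forest_def)
  let ?L = "{u\<in>X. le u v \<and> le u w}"
  have "\<exists>m\<in>?L. \<forall>u\<in>?L. le u m"
  proof (rule finite_max_rel)
    show "finite ?L" using fin by simp
    show "?L \<noteq> {}" using r assms(2,3) by blast
    show "\<forall>x\<in>?L. \<forall>y\<in>?L. le x y \<or> le y x" using ch assms(2) by blast
    show "\<forall>x\<in>?L. \<forall>y\<in>?L. \<forall>z\<in>?L. le x y \<and> le y z \<longrightarrow> le x z" using po unfolding porder_on_def by blast
  qed
  then obtain m where m: "m \<in> ?L" "\<forall>u\<in>?L. le u m" by blast
  have im: "is_meet X le v w m" using m unfolding is_meet_def by blast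
  have "tmeet X le v w = m"
    by (rule tmeet_eq[OF _ im]) (use po in \<open>unfold porder_on_def, blast\<close>)
  then show ?thesis using im by simp
qed

lemma aplus_antisym:
  assumes "linorder_on A leA" "forest F le"
  shows "\<forall>a\<in>a_plus A F. \<forall>b\<in>a_plus A F. a_plus_rel leA le a b \<and> a_plus_rel leA le b a \<longrightarrow> a = b"
proof (intro ballI impI)
  have aA: "\<forall>x\<in>A. \<forall>y\<in>A. leA x y \<and> leA y x \<longrightarrow> x = y"
    using assms(1) unfolding linorder_on_def porder_on_def by blast
  have aF: "\<forall>x\<in>F. \<forall>y\<in>F. le x y \<and> le y x \<longrightarrow> x = y"
    using assms(2) unfolding forest_def porder_on_def by blast
  fix a b assume ab: "a \<in> a_plus A F" "b \<in> a_plus A F"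
    and h: "a_plus_rel leA le a b \<and> a_plus_rel leA le b a"
  show "a = b"
  proof (cases a; cases b)
    fix x y assume "a = Inl x" "b = Inl y" then show ?thesis using aA ab h by (auto simp: a_plus_def a_plus_rel_def)
  next
    fix x y assume "a = Inl x" "b = Inr y" then show ?thesis using h by (simp add: a_plus_rel_def)
  next
    fix x y assume "a = Inr x" "b = Inl y" then show ?thesis using h by (simp add: a_plus_rel_def)
  next
    fix x y assume "a = Inr x" "b = Inr y" then show ?thesis using aF ab h by (auto simp: a_plus_def a_plus_rel_def)
  qed
qed

lemma meet_LL:
  assumes "linorder_on A leA" "forest F le" "a \<in> A" "b \<in> A"
  shows "tmeet (a_plus A F) (a_plus_rel leA le) (Inl a) (Inl b) = Inl (if leA a b then a else b)"
proof (rule tmeet_eq[OF aplus_antisym[OF assms(1,2)]])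
  have rf: "\<forall>x\<in>A. leA x x" and tot: "\<forall>x\<in>A. \<forall>y\<in>A. leA x y \<or> leA y x"
    and tr: "\<forall>x\<in>A. \<forall>y\<in>A. \<forall>z\<in>A. leA x y \<and> leA y z \<longrightarrow> leA x z"
    using assms(1) unfolding linorder_on_def porder_on_def by blast+
  show "is_meet (a_plus A F) (a_plus_rel leA le) (Inl a) (Inl b) (Inl (if leA a b then a else b))"
    unfolding is_meet_def
  proof (intro conjI ballI impI)
    show "Inl (if leA a b then a else b) \<in> a_plus A F" using assms(3,4) by (simp add: a_plus_def)
    show "a_plus_rel leA le (Inl (if leA a b then a else b)) (Inl a)"
      using rf tot assms(3,4) unfolding a_plus_rel_def by (cases "leA a b") auto
    show "a_plus_rel leA le (Inl (if leA a b then a else b)) (Inl b)"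
      using rf tot assms(3,4) unfolding a_plus_rel_def by (cases "leA a b") auto
    fix u assume u: "u \<in> a_plus A F" and h: "a_plus_rel leA le u (Inl a) \<and> a_plus_rel leA le u (Inl b)"
    show "a_plus_rel leA le u (Inl (if leA a b then a else b))"
    proof (cases u)
      case (Inl c) then show ?thesis using h by (simp add: a_plus_rel_def)
    next
      case (Inr z) then show ?thesis using h by (simp add: a_plus_rel_def)
    qed
  qed
qed

lemma meet_LR:
  assumes "linorder_on A leA" "forest F le" "a \<in> A" "x \<in> F"
  shows "tmeet (a_plus A F) (a_plus_rel leA le) (Inl a) (Inr x) = Inl a"
proof (rule tmeet_eq[OF aplus_antisym[OF assms(1,2)]])
  have rf: "\<forall>x\<in>A. leA x x"
    using assms(1) unfolding linorder_on_def porder_on_def by blast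
  show "is_meet (a_plus A F) (a_plus_rel leA le) (Inl a) (Inr x) (Inl a)"
    unfolding is_meet_def
  proof (intro conjI ballI impI)
    show "Inl a \<in> a_plus A F" using assms(3) by (simp add: a_plus_def)
    show "a_plus_rel leA le (Inl a) (Inl a)" using rf assms(3) by (simp add: a_plus_rel_def)
    show "a_plus_rel leA le (Inl a) (Inr x)" by (simp add: a_plus_rel_def)
    fix u assume h: "a_plus_rel leA le u (Inl a) \<and> a_plus_rel leA le u (Inr x)"
    then show "a_plus_rel leA le u (Inl a)" by blast
  qed
qed

lemma meet_RL:
  assumes "linorder_on A leA" "forest F le" "a \<in> A" "x \<in> F"
  shows "tmeet (a_plus A F) (a_plus_rel leA le) (Inr x) (Inl a) = Inl a"
proof (rule tmeet_eq[OF aplus_antisym[OF assms(1,2)]])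
  have rf: "\<forall>x\<in>A. leA x x"
    using assms(1) unfolding linorder_on_def porder_on_def by blast
  show "is_meet (a_plus A F) (a_plus_rel leA le) (Inr x) (Inl a) (Inl a)"
    unfolding is_meet_def
  proof (intro conjI ballI impI)
    show "Inl a \<in> a_plus A F" using assms(3) by (simp add: a_plus_def)
    show "a_plus_rel leA le (Inl a) (Inl a)" using rf assms(3) by (simp add: a_plus_rel_def)
    show "a_plus_rel leA le (Inl a) (Inr x)" by (simp add: a_plus_rel_def)
    fix u assume h: "a_plus_rel leA le u (Inr x) \<and> a_plus_rel leA le u (Inl a)"
    then show "a_plus_rel leA le u (Inl a)" by blast
  qed
qed

lemma meet_RR:
  assumes "linorder_on A leA" "forest F le" "tree (one_plus F) (one_plus_rel le)"
    and "amax \<in> A" "\<forall>c\<in>A. leA c amax" "x \<in> F" "y \<in> F"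
  shows "tmeet (a_plus A F) (a_plus_rel leA le) (Inr x) (Inr y) =
    (case tmeet (one_plus F) (one_plus_rel le) (Some x) (Some y) of None \<Rightarrow> Inl amax | Some m \<Rightarrow> Inr m)"
proof -
  define M where "M = tmeet (one_plus F) (one_plus_rel le) (Some x) (Some y)"
  have im: "is_meet (one_plus F) (one_plus_rel le) (Some x) (Some y) M"
    unfolding M_def by (rule tree_meet[OF assms(3)]) (use assms(6,7) in \<open>auto simp: one_plus_def\<close>)
  show ?thesis
  proof (cases M)
    case None
    have "is_meet (a_plus A F) (a_plus_rel leA le) (Inr x) (Inr y) (Inl amax)"
      unfolding is_meet_def
    proof (intro conjI ballI impI)
      show "Inl amax \<in> a_plus A F" using assms(4) by (simp add: a_plus_def)
      show "a_plus_rel leA le (Inl amax) (Inr x)" by (simp add: a_plus_rel_def)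
      show "a_plus_rel leA le (Inl amax) (Inr y)" by (simp add: a_plus_rel_def)
      fix u assume u: "u \<in> a_plus A F" and h: "a_plus_rel leA le u (Inr x) \<and> a_plus_rel leA le u (Inr y)"
      show "a_plus_rel leA le u (Inl amax)"
      proof (cases u)
        case (Inl c) then show ?thesis using u assms(5) by (auto simp: a_plus_def a_plus_rel_def)
      next
        case (Inr z)
        then have "z \<in> F" "le z x" "le z y" using u h by (auto simp: a_plus_def a_plus_rel_def)
        then have "one_plus_rel le (Some z) M" using im unfolding is_meet_def
          by (auto simp: one_plus_def one_plus_rel_def)
        then show ?thesis using None by (simp add: one_plus_rel_def)
      qed
    qed
    then have th: "tmeet (a_plus A F) (a_plus_rel leA le) (Inr x) (Inr y) = Inl amax"
      by (rule tmeet_eq[OF aplus_antisym[OF assms(1,2)]])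
    have Mv: "tmeet (one_plus F) (one_plus_rel le) (Some x) (Some y) = None" using None M_def by simp
    show ?thesis by (simp only: th Mv option.case)
  next
    case (Some m)
    have mF: "m \<in> F" "le m x" "le m y" using im Some
      by (auto simp: is_meet_def one_plus_def one_plus_rel_def)
    have "is_meet (a_plus A F) (a_plus_rel leA le) (Inr x) (Inr y) (Inr m)"
      unfolding is_meet_def
    proof (intro conjI ballI impI)
      show "Inr m \<in> a_plus A F" using mF by (simp add: a_plus_def)
      show "a_plus_rel leA le (Inr m) (Inr x)" using mF by (simp add: a_plus_rel_def)
      show "a_plus_rel leA le (Inr m) (Inr y)" using mF by (simp add: a_plus_rel_def)
      fix u assume u: "u \<in> a_plus A F" and h: "a_plus_rel leA le u (Inr x) \<and> a_plus_rel leA le u (Inr y)"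
      show "a_plus_rel leA le u (Inr m)"
      proof (cases u)
        case (Inl c) then show ?thesis by (auto simp: a_plus_rel_def)
      next
        case (Inr z)
        then have "z \<in> F" "le z x" "le z y" using u h by (auto simp: a_plus_def a_plus_rel_def)
        then have "one_plus_rel le (Some z) M" using im unfolding is_meet_def
          by (auto simp: one_plus_def one_plus_rel_def)
        then show ?thesis using Some Inr by (simp add: one_plus_rel_def a_plus_rel_def)
      qed
    qed
    then have th: "tmeet (a_plus A F) (a_plus_rel leA le) (Inr x) (Inr y) = Inr m"
      by (rule tmeet_eq[OF aplus_antisym[OF assms(1,2)]])
    have Mv: "tmeet (one_plus F) (one_plus_rel le) (Some x) (Some y) = Some m" using Some M_def by simp
    show ?thesis by (simp only: th Mv option.case)
  qed
qed

lemma troot_one_plus: "troot (one_plus F) (one_plus_rel le) = None"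
  unfolding troot_def
  apply (rule the_equality)
   apply (simp add: one_plus_def one_plus_rel_def)
  apply (auto simp: one_plus_def one_plus_rel_def split: option.splits)
  done

lemma troot_aplus:
  assumes "linorder_on A leA" "forest F le" "amin \<in> A" "\<forall>c\<in>A. leA amin c"
  shows "troot (a_plus A F) (a_plus_rel leA le) = Inl amin"
  unfolding troot_def
proof (rule the_equality)
  show "Inl amin \<in> a_plus A F \<and> (\<forall>w\<in>a_plus A F. a_plus_rel leA le (Inl amin) w)"
    using assms(3,4) by (auto simp: a_plus_def a_plus_rel_def)
  fix r assume r: "r \<in> a_plus A F \<and> (\<forall>w\<in>a_plus A F. a_plus_rel leA le r w)"
  have "Inl amin \<in> a_plus A F" using assms(3) by (simp add: a_plus_def)
  moreover have "a_plus_rel leA le (Inl amin) r" using r assms(4) by (auto simp: a_plus_def a_plus_rel_def)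
  ultimately show "r = Inl amin" using r aplus_antisym[OF assms(1,2)] by blast
qed

theorem lemma4p10:
  fixes S :: "'a set" and leS loS :: "'a \<Rightarrow> 'a \<Rightarrow> bool"
    and T :: "'b set" and leT loT :: "'b \<Rightarrow> 'b \<Rightarrow> bool"
    and A :: "'c set" and leA :: "'c \<Rightarrow> 'c \<Rightarrow> bool"
    and i :: "'a \<Rightarrow> 'b"
  assumes "ordered_forest S leS loS"
    and "ordered_forest T leT loT"
    and "finite A" and "A \<noteq> {}" and "linorder_on A leA"
    and "tree_embedding S leS loS T leT loT i"
  shows "\<exists>s e. A_rigid_surj_inj A leA T leT loT S leS loS s e \<and>
                (\<forall>x\<in>S. e (Inr x) = Inr (i x))"

proof -
  from assms(1) have fS: "forest S leS" and tS: "tree (one_plus S) (one_plus_rel leS)"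
    unfolding ordered_forest_def ordered_tree_def by simp_all
  from assms(2) have fT: "forest T leT" and tT: "tree (one_plus T) (one_plus_rel leT)"
    unfolding ordered_forest_def ordered_tree_def by simp_all
  from assms(6) obtain e' where iST: "i ` S \<subseteq> T"
    and emb: "ot_embedding (one_plus S) (one_plus_rel leS) (one_plus_rel loS)
                        (one_plus T) (one_plus_rel leT) (one_plus_rel loT) e'"
    and ei: "\<forall>x\<in>S. e' (Some x) = Some (i x)" unfolding tree_embedding_def by blast
  from emb have inje: "inj_on e' (one_plus S)" and
    emeet: "\<forall>v\<in>one_plus S. \<forall>w\<in>one_plus S. e' (tmeet (one_plus S) (one_plus_rel leS) v w)
        = tmeet (one_plus T) (one_plus_rel leT) (e' v) (e' w)"
    and elo: "\<forall>v\<in>one_plus S. \<forall>w\<in>one_plus S. one_plus_rel loS v w \<longrightarrow> one_plus_rel loT (e' v) (e' w)"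
    and eroot: "e' (troot (one_plus S) (one_plus_rel leS)) = troot (one_plus T) (one_plus_rel leT)"
    unfolding ot_embedding_def ot_morphism_def by blast+
  have eN: "e' None = None" using eroot by (simp add: troot_one_plus)
  have inji: "inj_on i S"
  proof (rule inj_onI)
    fix x y assume "x \<in> S" "y \<in> S" "i x = i y"
    then have "e' (Some x) = e' (Some y)" using ei by simp
    then show "x = y" using inje \<open>x \<in> S\<close> \<open>y \<in> S\<close> by (auto simp: one_plus_def inj_on_def)
  qed
  have poA: "porder_on A leA" and totA: "\<forall>x\<in>A. \<forall>y\<in>A. leA x y \<or> leA y x"
    using assms(5) unfolding linorder_on_def by blast+
  obtain amax where amax: "amax \<in> A" "\<forall>c\<in>A. leA c amax"
    using finite_max_rel[of A leA] assms(3,4) totA poA unfolding porder_on_def by blast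
  obtain amin where amin: "amin \<in> A" "\<forall>c\<in>A. leA amin c"
    using finite_max_rel[of A "\<lambda>x y. leA y x"] assms(3,4) totA poA unfolding porder_on_def by blast
  have poT: "porder_on T leT" and chT: "\<forall>w\<in>T. \<forall>u\<in>T. \<forall>v\<in>T. leT u w \<and> leT v w \<longrightarrow> leT u v \<or> leT v u"
    and finS: "finite S"
    using fT fS unfolding forest_def by blast+
  define e :: "'c + 'a \<Rightarrow> 'c + 'b" where "e = (\<lambda>v. case v of Inl a \<Rightarrow> Inl a | Inr x \<Rightarrow> Inr (i x))"
  define P where "P = (\<lambda>t x. x \<in> S \<and> leT (i x) t \<and> (\<forall>y\<in>S. leT (i y) t \<longrightarrow> leT (i y) (i x)))"
  define s :: "'c + 'b \<Rightarrow> 'c + 'a" where "s = (\<lambda>w. case w of Inl a \<Rightarrow> Inl a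
      | Inr t \<Rightarrow> (if \<exists>x\<in>S. leT (i x) t then Inr (SOME x. P t x) else Inl amax))"
  have smax: "\<exists>x. P t x" if "t \<in> T" "\<exists>x\<in>S. leT (i x) t" for t
  proof -
    let ?L = "{x\<in>S. leT (i x) t}"
    have "\<exists>m\<in>?L. \<forall>u\<in>?L. leT (i u) (i m)"
    proof (rule finite_max_rel)
      show "finite ?L" using finS by simp
      show "?L \<noteq> {}" using that by blast
      show "\<forall>x\<in>?L. \<forall>y\<in>?L. leT (i x) (i y) \<or> leT (i y) (i x)" using chT that(1) iST by blast
      show "\<forall>x\<in>?L. \<forall>y\<in>?L. \<forall>z\<in>?L. leT (i x) (i y) \<and> leT (i y) (i z) \<longrightarrow> leT (i x) (i z)"
        using poT iST unfolding porder_on_def by blast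
    qed
    then show ?thesis unfolding P_def by blast
  qed
  have sP: "P t (SOME x. P t x)" if "t \<in> T" "\<exists>x\<in>S. leT (i x) t" for t
    using smax[OF that] by (rule someI_ex)
  have iT: "i x \<in> T" if "x \<in> S" for x using iST that by blast
  have m1: "e ` a_plus A S \<subseteq> a_plus A T" using iST by (auto simp: e_def a_plus_def)
  have m2: "\<forall>v\<in>a_plus A S. \<forall>w\<in>a_plus A S. e (tmeet (a_plus A S) (a_plus_rel leA leS) v w) =
      tmeet (a_plus A T) (a_plus_rel leA leT) (e v) (e w)"
  proof (intro ballI)
    fix v w assume v: "v \<in> a_plus A S" and w: "w \<in> a_plus A S"
    show "e (tmeet (a_plus A S) (a_plus_rel leA leS) v w) = tmeet (a_plus A T) (a_plus_rel leA leT) (e v) (e w)"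
    proof (cases v)
      case (Inl a)
      then have a: "a \<in> A" using v by (auto simp: a_plus_def)
      show ?thesis
      proof (cases w)
        case (Inl b)
        then have b: "b \<in> A" using w by (auto simp: a_plus_def)
        show ?thesis using \<open>v = Inl a\<close> Inl
          by (simp add: e_def meet_LL[OF assms(5) fS a b] meet_LL[OF assms(5) fT a b])
      next
        case (Inr y)
        then have y: "y \<in> S" using w by (auto simp: a_plus_def)
        show ?thesis using \<open>v = Inl a\<close> Inr
          by (simp add: e_def meet_LR[OF assms(5) fS a y] meet_LR[OF assms(5) fT a iT[OF y]])
      qed
    next
      case (Inr x)
      then have x: "x \<in> S" using v by (auto simp: a_plus_def)
      show ?thesis
      proof (cases w)
        case (Inl b)
        then have b: "b \<in> A" using w by (auto simp: a_plus_def)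
        show ?thesis using \<open>v = Inr x\<close> Inl
          by (simp add: e_def meet_RL[OF assms(5) fS b x] meet_RL[OF assms(5) fT b iT[OF x]])
      next
        case (Inr y)
        then have y: "y \<in> S" using w by (auto simp: a_plus_def)
        define M where "M = tmeet (one_plus S) (one_plus_rel leS) (Some x) (Some y)"
        have Mi: "M \<in> one_plus S" using tree_meet[OF tS, of "Some x" "Some y"] x y
          unfolding M_def is_meet_def by (auto simp: one_plus_def)
        have "tmeet (one_plus T) (one_plus_rel leT) (Some (i x)) (Some (i y)) = e' M"
          using emeet x y ei unfolding M_def by (auto simp: one_plus_def)
        then show ?thesis using \<open>v = Inr x\<close> Inr Mi eN ei
          by (auto simp: e_def meet_RR[OF assms(5) fS tS amax x y, folded M_def]
             meet_RR[OF assms(5) fT tT amax iT[OF x] iT[OF y]] one_plus_def split: option.splits)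
      qed
    qed
  qed
  have m3: "\<forall>v\<in>a_plus A S. \<forall>w\<in>a_plus A S. a_plus_rel leA loS v w \<longrightarrow> a_plus_rel leA loT (e v) (e w)"
    using elo ei by (auto simp: a_plus_def a_plus_rel_def e_def one_plus_def one_plus_rel_def)
  have m4: "e (troot (a_plus A S) (a_plus_rel leA leS)) = troot (a_plus A T) (a_plus_rel leA leT)"
    by (simp add: troot_aplus[OF assms(5) fS amin] troot_aplus[OF assms(5) fT amin] e_def)
  have r1: "s ` a_plus A T \<subseteq> a_plus A S"
  proof
    fix u assume "u \<in> s ` a_plus A T"
    then obtain w where w: "w \<in> a_plus A T" "u = s w" by blast
    show "u \<in> a_plus A S"
    proof (cases w)
      case (Inl a) then show ?thesis using w by (auto simp: s_def a_plus_def)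
    next
      case (Inr t)
      then have t: "t \<in> T" using w by (auto simp: a_plus_def)
      show ?thesis using w Inr sP[OF t] amax(1) by (auto simp: s_def a_plus_def P_def)
    qed
  qed
  have r2: "\<forall>x\<in>a_plus A S. s (e x) = x"
  proof
    fix v assume v: "v \<in> a_plus A S"
    show "s (e v) = v"
    proof (cases v)
      case (Inl a) then show ?thesis by (simp add: s_def e_def)
    next
      case (Inr x)
      then have x: "x \<in> S" using v by (auto simp: a_plus_def)
      have ex: "\<exists>z\<in>S. leT (i z) (i x)" using x poT iT[OF x] unfolding porder_on_def by blast
      define z where "z = (SOME z. P (i x) z)"
      have "P (i x) z" unfolding z_def by (rule sP[OF iT[OF x] ex])
      then have "z \<in> S" "leT (i z) (i x)" "leT (i x) (i z)"
        using x poT iT[OF x] unfolding P_def porder_on_def by blast+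
      then have "i z = i x" using poT iT[OF x] iT unfolding porder_on_def by blast
      then have "z = x" using inji x \<open>z \<in> S\<close> by (auto simp: inj_on_def)
      then show ?thesis using Inr ex by (simp add: s_def e_def z_def)
    qed
  qed
  have r3: "\<forall>w\<in>a_plus A T. a_plus_rel leA leT (e (s w)) w"
  proof
    fix w assume w: "w \<in> a_plus A T"
    show "a_plus_rel leA leT (e (s w)) w"
    proof (cases w)
      case (Inl a)
      then have "a \<in> A" using w by (auto simp: a_plus_def)
      then have "leA a a" using poA unfolding porder_on_def by blast
      then show ?thesis using Inl by (simp add: s_def e_def a_plus_rel_def)
    next
      case (Inr t)
      then have t: "t \<in> T" using w by (auto simp: a_plus_def)
      show ?thesis using Inr sP[OF t] by (auto simp: s_def e_def a_plus_rel_def P_def)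
    qed
  qed
  have "A_rigid_surj_inj A leA T leT loT S leS loS s e"
    unfolding A_rigid_surj_inj_def rigid_surj_inj_def ot_morphism_def
    using m1 m2 m3 m4 r1 r2 r3 by (simp add: s_def)
  moreover have "\<forall>x\<in>S. e (Inr x) = Inr (i x)" by (simp add: e_def)
  ultimately show ?thesis by blast
qed

end
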